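(* Let $\alpha,\beta\in C^\infty(\mathbb R)$ and consider $u_t=K:=uu_x+\hbar^2\alpha(u)u_x^3$. Then the formal series $$Q_\beta=\sum_{n=0}^\infty\hbar^{2n}\frac{\alpha(u)^n\beta^{(n)}(u)}{n!}u_x^{2n+1}$$ is a formal symmetry: $K'[Q_\beta]-Q_\beta'[K]=0$ order by order in $\hbar$. Its coefficients $\beta_n$ (with $Q_\beta=\sum\hbar^{2n}\beta_nu_x^{2n+1}$, $\beta_0=\beta$) are the unique solution of $n\beta_n=(1-n)\alpha'\beta_{n-1}+\alpha\beta_{n-1}'$, $n\ge1$, and $Q_\beta$ is the unique formal symmetry $\sum_{n\ge0}\hbar^{2n}Q_{2n+1}$, $Q_{2n+1}\in\mathcal D_{2n+1}$, with $Q_1=\beta(u)u_x$.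
   Context: $u_k=\partial_x^ku$; $\mathcal D=C^\infty(\mathbb R)[u_1,u_2,\dots]$ (coefficients smooth in $u$), graded by $\deg u_k=k$; $\mathcal D_k$ is the span of degree-$k$ monomials. Total derivative $D=\sum_{r\ge0}u_{r+1}\partial/\partial u_r$ ($u_0=u$); Fréchet derivative $P'[V]=\sum_{r\ge0}\frac{\partial P}{\partial u_r}D^rV$, extended coefficientwise to formal series in the formal parameter $\hbar$. A formal symmetry of $u_t=K$ is a formal series $Q$ with $K'[Q]-Q'[K]=0$. $\beta^{(n)}$ is the $n$-th derivative of $\beta$. *)

theory Defs
  imports "HOL-Analysis.Analysis" "HOL-Library.Multiset"
begin

definition C_inf :: "(real \<Rightarrow> real) \<Rightarrow> bool" where
  "C_inf f \<longleftrightarrow> (\<forall>n x. ((deriv ^^ n) f) differentiable (at x))"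

text \<open>A differential polynomial in D = C^inf(R)[u_1,u_2,...] is represented by its
  coefficient family: a monomial u_{k1}...u_{km} (all k_i \<ge> 1) is the multiset
  {#k1,...,km#}, and P M :: real \<Rightarrow> real is its coefficient (a function of u = u_0).\<close>
type_synonym dpoly = "nat multiset \<Rightarrow> real \<Rightarrow> real"

definition in_D :: "dpoly \<Rightarrow> bool" where
  "in_D P \<longleftrightarrow> finite {M. P M \<noteq> (\<lambda>_. 0)}
     \<and> (\<forall>M. P M \<noteq> (\<lambda>_. 0) \<longrightarrow> 0 \<notin># M)
     \<and> (\<forall>M. C_inf (P M))"

definition in_Dk :: "nat \<Rightarrow> dpoly \<Rightarrow> bool" where
  "in_Dk k P \<longleftrightarrow> in_D P \<and> (\<forall>M. P M \<noteq> (\<lambda>_. 0) \<longrightarrow> sum_mset M = k)"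

definition dzero :: dpoly where "dzero = (\<lambda>M x. 0)"

definition dadd :: "dpoly \<Rightarrow> dpoly \<Rightarrow> dpoly" where
  "dadd P R = (\<lambda>M x. P M x + R M x)"

definition dmonom :: "(real \<Rightarrow> real) \<Rightarrow> nat multiset \<Rightarrow> dpoly" where
  "dmonom c M = (\<lambda>N. if N = M then c else (\<lambda>_. 0))"

definition dmult :: "dpoly \<Rightarrow> dpoly \<Rightarrow> dpoly" where
  "dmult P R = (\<lambda>M x. \<Sum>A\<in>{A. A \<subseteq># M}. P A x * R (M - A) x)"

definition dpartial :: "nat \<Rightarrow> dpoly \<Rightarrow> dpoly" where
  "dpartial r P = (if r = 0 then (\<lambda>N. deriv (P N))
                   else (\<lambda>N x. real (count N r + 1) * P (N + {#r#}) x))"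

text \<open>Total derivative D = sum_r u_{r+1} d/du_r.\<close>
definition Dtot :: "dpoly \<Rightarrow> dpoly" where
  "Dtot P = (\<lambda>M x. \<Sum>s\<in>set_mset M - {0}. dpartial (s - 1) P (M - {#s#}) x)"

text \<open>Frechet derivative P'[V] = sum_r (dP/du_r) D^r V (only finitely many nonzero terms).\<close>
definition frechet :: "dpoly \<Rightarrow> dpoly \<Rightarrow> dpoly" where
  "frechet P V = (\<lambda>M x. \<Sum>r\<in>{r. dpartial r P \<noteq> dzero}. dmult (dpartial r P) ((Dtot ^^ r) V) M x)"

text \<open>Formal series in hbar: S m is the coefficient of hbar^m.\<close>
type_synonym fseries = "nat \<Rightarrow> dpoly"

text \<open>Formal symmetry Q of u_t = K: K'[Q] - Q'[K] = 0 order by order in hbar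
  (Frechet derivative extended coefficientwise).\<close>
definition formal_symmetry :: "fseries \<Rightarrow> fseries \<Rightarrow> bool" where
  "formal_symmetry K Q \<longleftrightarrow>
     (\<forall>m M x. (\<Sum>i\<le>m. frechet (K i) (Q (m - i)) M x) = (\<Sum>i\<le>m. frechet (Q (m - i)) (K i) M x))"

definition KK :: "(real \<Rightarrow> real) \<Rightarrow> fseries" where
  "KK a = (\<lambda>m. if m = 0 then dmonom (\<lambda>x. x) {#1#}
               else if m = 2 then dmonom a (replicate_mset 3 1)
               else dzero)"

definition Qb :: "(real \<Rightarrow> real) \<Rightarrow> (real \<Rightarrow> real) \<Rightarrow> fseries" where
  "Qb a b = (\<lambda>m. if even m then
        dmonom (\<lambda>x. a x ^ (m div 2) * (deriv ^^ (m div 2)) b x / fact (m div 2))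
               (replicate_mset (2 * (m div 2) + 1) 1)
      else dzero)"

end

theory Submission imports Defs begin

lemma finite_submsets: "finite {A. A \<subseteq># (N::'a multiset)}"
proof (induction N)
  case empty then show ?case by simp
next
  case (add x N)
  have "{A. A \<subseteq># add_mset x N} \<subseteq> {A. A \<subseteq># N} \<union> add_mset x ` {A. A \<subseteq># N}"
  proof
    fix A assume "A \<in> {A. A \<subseteq># add_mset x N}"
    then have A: "A \<subseteq># add_mset x N" by simp
    show "A \<in> {A. A \<subseteq># N} \<union> add_mset x ` {A. A \<subseteq># N}"
    proof (cases "x \<in># A")
      case True
      then have e: "A = add_mset x (A - {#x#})" by simp
      have "add_mset x (A - {#x#}) \<subseteq># add_mset x N" using A e by simp
      then have "A - {#x#} \<subseteq># N" by simp
      with e show ?thesis by blast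
    next
      case False
      have "count A y \<le> count N y" for y
      proof (cases "y = x")
        case True then show ?thesis using False by (simp add: not_in_iff)
      next
        case ne: False
        show ?thesis using mset_subset_eq_count[OF A, of y] ne by simp
      qed
      then have "A \<subseteq># N" by (rule mset_subset_eqI)
      then show ?thesis by blast
    qed
  qed
  moreover have "finite ({A. A \<subseteq># N} \<union> add_mset x ` {A. A \<subseteq># N})"
    using add by simp
  ultimately show ?case by (rule finite_subset)
qed

lemma dmult_monom: "dmult (dmonom c A) R N x = (if A \<subseteq># N then c x * R (N - A) x else 0)"
proof -
  have "dmult (dmonom c A) R N x = (\<Sum>A'\<in>{A'. A' \<subseteq># N}. if A' = A then c x * R (N - A') x else 0)"
    unfolding dmult_def dmonom_def by (rule sum.cong) auto
  also have "\<dots> = (if A \<subseteq># N then c x * R (N - A) x else 0)"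
    using finite_submsets[of N] by simp
  finally show ?thesis .
qed

lemma dmult_dzero1 [simp]: "dmult dzero R N x = 0"
  unfolding dmult_def dzero_def by simp

lemma dmult_dzero2 [simp]: "dmult P dzero N x = 0"
  unfolding dmult_def dzero_def by simp

lemma dmult_diff1: "dmult (\<lambda>N x. P1 N x - P2 N x) R N x = dmult P1 R N x - dmult P2 R N x"
  unfolding dmult_def by (simp add: left_diff_distrib sum_subtractf)

lemma dpartial_monom0: "dpartial 0 (dmonom c M) = dmonom (deriv c) M"
  unfolding dpartial_def dmonom_def by (auto intro!: ext)

lemma add_mset_eq_rep: "add_mset a N = replicate_mset k b \<longleftrightarrow> k \<ge> 1 \<and> a = b \<and> N = replicate_mset (k - 1) b"
proof (cases k)
  case 0 then show ?thesis by simp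
next
  case (Suc n)
  have "a = b" if h: "add_mset a N = add_mset b (replicate_mset n b)"
  proof -
    have "a \<in># add_mset b (replicate_mset n b)" by (metis h union_single_eq_member)
    then show ?thesis by (auto split: if_splits)
  qed
  then show ?thesis using Suc by auto
qed

lemma dpartial_rep1:
  assumes "k \<ge> 1"
  shows "dpartial 1 (dmonom c (replicate_mset k 1)) = dmonom (\<lambda>x. real k * c x) (replicate_mset (k - 1) 1)"
  using assms unfolding dpartial_def dmonom_def
  by (auto intro!: ext simp: add_mset_eq_rep)

lemma dpartial_rep_ge2:
  assumes "r \<ge> 2"
  shows "dpartial r (dmonom c (replicate_mset k 1)) = dzero"
  using assms unfolding dpartial_def dmonom_def dzero_def
  by (auto intro!: ext simp: add_mset_eq_rep)

lemma frechet_bounded: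
  assumes "\<And>r. r > B \<Longrightarrow> dpartial r P = dzero"
  shows "frechet P V N x = (\<Sum>r\<le>B. dmult (dpartial r P) ((Dtot ^^ r) V) N x)"
  unfolding frechet_def
proof (rule sum.mono_neutral_left)
  show "finite {..B}" by simp
  show "{r. dpartial r P \<noteq> dzero} \<subseteq> {..B}" using assms by (auto simp: not_less[symmetric])
  show "\<forall>i\<in>{..B} - {r. dpartial r P \<noteq> dzero}. dmult (dpartial i P) ((Dtot ^^ i) V) N x = 0"
    by simp
qed

lemma frechet_rep:
  assumes "k \<ge> 1"
  shows "frechet (dmonom c (replicate_mset k 1)) V N x =
     (if replicate_mset k 1 \<subseteq># N then deriv c x * V (N - replicate_mset k 1) x else 0)
   + (if replicate_mset (k - 1) 1 \<subseteq># N then real k * c x * Dtot V (N - replicate_mset (k - 1) 1) x else 0)"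
proof -
  have "frechet (dmonom c (replicate_mset k 1)) V N x =
     (\<Sum>r\<le>1. dmult (dpartial r (dmonom c (replicate_mset k 1))) ((Dtot ^^ r) V) N x)"
    by (rule frechet_bounded, rule dpartial_rep_ge2) simp
  also have "\<dots> = dmult (dpartial 0 (dmonom c (replicate_mset k 1))) V N x
      + dmult (dpartial 1 (dmonom c (replicate_mset k 1))) (Dtot V) N x"
    by (simp add: atMost_Suc)
  finally show ?thesis
    using assms by (simp add: dpartial_monom0 dpartial_rep1[simplified] dmult_monom)
qed

lemma sum12:
  fixes f :: "nat \<Rightarrow> real"
  assumes "finite S" "\<And>s. s \<in> S \<Longrightarrow> s \<noteq> 1 \<Longrightarrow> s \<noteq> 2 \<Longrightarrow> f s = 0"
  shows "sum f S = (if 1 \<in> S then f 1 else 0) + (if 2 \<in> S then f 2 else 0)"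
proof -
  have "sum f S = sum f (S \<inter> {1,2})"
    using assms by (intro sum.mono_neutral_right) auto
  also have "\<dots> = (if 1 \<in> S then f 1 else 0) + (if 2 \<in> S then f 2 else 0)"
    by (cases "1 \<in> S"; cases "2 \<in> S") (auto simp: Int_insert_right)
  finally show ?thesis .
qed

lemma in_diff_eq: "(a \<in># N \<and> N - {#a#} = X) = (N = add_mset a X)"
  by (auto simp: insert_DiffM)

lemma if_in_diff:
  assumes "a \<noteq> 0"
  shows "(if a \<in> set_mset N - {0} then (if N - {#a#} = X then v else 0) else 0) = (if N = add_mset a X then v else (0::real))"
proof (cases "N = add_mset a X")
  case True then show ?thesis using assms by simp
next
  case False
  then have "\<not> (a \<in># N \<and> N - {#a#} = X)" using in_diff_eq by metis
  then show ?thesis using False by auto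
qed

lemma Dtot_rep:
  assumes "k \<ge> 1"
  shows "Dtot (dmonom c (replicate_mset k 1)) N x =
     (if N = replicate_mset (Suc k) 1 then deriv c x else 0)
   + (if N = add_mset 2 (replicate_mset (k - 1) 1) then real k * c x else 0)"
proof -
  let ?P = "dmonom c (replicate_mset k 1)"
  have "Dtot ?P N x = (\<Sum>s\<in>set_mset N - {0}. dpartial (s - 1) ?P (N - {#s#}) x)"
    unfolding Dtot_def by (rule refl)
  also have "\<dots> = (if 1 \<in> set_mset N - {0} then dpartial (1 - 1) ?P (N - {#1#}) x else 0)
      + (if 2 \<in> set_mset N - {0} then dpartial (2 - 1) ?P (N - {#2#}) x else 0)"
  proof (rule sum12)
    fix s assume s: "s \<in> set_mset N - {0}" "s \<noteq> 1" "s \<noteq> 2"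
    then have "dpartial (s - 1) ?P = dzero" by (intro dpartial_rep_ge2) auto
    then show "dpartial (s - 1) ?P (N - {#s#}) x = 0" by (simp add: dzero_def)
  qed simp
  also have "\<dots> = (if N = replicate_mset (Suc k) 1 then deriv c x else 0)
   + (if N = add_mset 2 (replicate_mset (k - 1) 1) then real k * c x else 0)"
  proof -
    have e1: "dpartial (1-1) ?P (N - {#1#}) x = (if N - {#1#} = replicate_mset k 1 then deriv c x else 0)"
    proof -
      have "dpartial (1-1) ?P = dmonom (deriv c) (replicate_mset k 1)" using dpartial_monom0 by simp
      then show ?thesis by (simp add: dmonom_def)
    qed
    have e2: "dpartial (2-1) ?P (N - {#2#}) x = (if N - {#2#} = replicate_mset (k - 1) 1 then real k * c x else 0)"
    proof -
      have "dpartial (2-1) ?P = dmonom (\<lambda>x. real k * c x) (replicate_mset (k-1) 1)"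
        using dpartial_rep1[OF assms, of c] by simp
      then show ?thesis by (simp add: dmonom_def)
    qed
    have f1: "(if 1 \<in> set_mset N - {0} then dpartial (1-1) ?P (N - {#1#}) x else 0)
        = (if N = replicate_mset (Suc k) 1 then deriv c x else 0)"
      unfolding e1 replicate_mset_Suc by (rule if_in_diff) simp
    have f2: "(if 2 \<in> set_mset N - {0} then dpartial (2-1) ?P (N - {#2#}) x else 0)
        = (if N = add_mset 2 (replicate_mset (k - 1) 1) then real k * c x else 0)"
      unfolding e2 by (rule if_in_diff) simp
    show ?thesis unfolding f1 f2 by (rule refl)
  qed
  finally show ?thesis .
qed

lemma rep_add: "replicate_mset m a + replicate_mset n a = replicate_mset (m + n) a"
  by (induct m) auto

lemma sub_diff_iff: "A \<subseteq># N \<Longrightarrow> (N - A = M) = (N = A + M)"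
  by (metis subset_mset.add_diff_inverse add_diff_cancel_left')

lemma not_sub_ne: "\<not> A \<subseteq># N \<Longrightarrow> N \<noteq> A + M"
  by auto

lemma guard_dmonom:
  "(if A \<subseteq># N then y * dmonom c B (N - A) x else 0) = (if N = A + B then y * c x else (0::real))"
proof (cases "A \<subseteq># N")
  case True then show ?thesis by (simp add: dmonom_def sub_diff_iff)
next
  case False then show ?thesis using not_sub_ne[OF False, of B] by simp
qed

lemma guard_Dtot:
  assumes "k \<ge> 1"
  shows "(if A \<subseteq># N then y * Dtot (dmonom c (replicate_mset k 1)) (N - A) x else 0)
   = (if N = A + replicate_mset (Suc k) 1 then y * deriv c x else 0)
   + (if N = A + add_mset 2 (replicate_mset (k - 1) 1) then y * (real k * c x) else 0)"
proof (cases "A \<subseteq># N")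
  case True then show ?thesis unfolding Dtot_rep[OF assms] by (simp add: sub_diff_iff distrib_left)
next
  case False
  have n1: "\<not> (N = A + replicate_mset (Suc k) 1)" using not_sub_ne[OF False] by blast
  have n2: "\<not> (N = A + add_mset 2 (replicate_mset (k - 1) 1))" using not_sub_ne[OF False] by blast
  show ?thesis by (simp only: False n1 n2 if_False)
qed

lemma add2_ne_rep [simp]: "add_mset (2::nat) X \<noteq> replicate_mset n 1" "replicate_mset n 1 \<noteq> add_mset (2::nat) X"
proof -
  show "add_mset (2::nat) X \<noteq> replicate_mset n 1"
  proof
    assume "add_mset (2::nat) X = replicate_mset n 1"
    then have "(2::nat) \<in># replicate_mset n 1" by (metis union_single_eq_member)
    then show False by (auto split: if_splits)
  qed
  then show "replicate_mset n 1 \<noteq> add_mset (2::nat) X" by metis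
qed

lemma add2_ne_rep' [simp]: "add_mset (2::nat) X \<noteq> replicate_mset n (Suc 0)" "replicate_mset n (Suc 0) \<noteq> add_mset (2::nat) X"
  using add2_ne_rep by simp_all

definition K0 :: dpoly where "K0 = dmonom (\<lambda>x. x) (replicate_mset 1 1)"

lemma KK0: "KK a 0 = K0" unfolding KK_def K0_def by simp
lemma KK2: "KK a 2 = dmonom a (replicate_mset 3 1)" unfolding KK_def by simp
lemma KKother: "i \<noteq> 0 \<Longrightarrow> i \<noteq> 2 \<Longrightarrow> KK a i = dzero" unfolding KK_def by simp

lemma L0:
  "frechet K0 (dmonom q (replicate_mset (Suc p) 1)) N x
   - frechet (dmonom q (replicate_mset (Suc p) 1)) K0 N x
   = (if N = replicate_mset (Suc (Suc p)) 1 then - real p * q x else 0)"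
proof -
  have "frechet K0 (dmonom q (replicate_mset (Suc p) 1)) N x
   = (if replicate_mset 1 1 \<subseteq># N then 1 * dmonom q (replicate_mset (Suc p) 1) (N - replicate_mset 1 1) x else 0)
   + (if replicate_mset 0 1 \<subseteq># N then (1 * x) * Dtot (dmonom q (replicate_mset (Suc p) 1)) (N - replicate_mset 0 1) x else 0)"
    unfolding K0_def by (subst frechet_rep) auto
  also have "\<dots> = (if N = replicate_mset 1 1 + replicate_mset (Suc p) 1 then 1 * q x else 0)
     + ((if N = replicate_mset 0 1 + replicate_mset (Suc (Suc p)) 1 then (1 * x) * deriv q x else 0)
       + (if N = replicate_mset 0 1 + add_mset 2 (replicate_mset (Suc p - 1) 1) then (1 * x) * (real (Suc p) * q x) else 0))"
    by (subst guard_Dtot) (simp_all only: guard_dmonom)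
  finally have A: "frechet K0 (dmonom q (replicate_mset (Suc p) 1)) N x = \<dots>" .
  have "frechet (dmonom q (replicate_mset (Suc p) 1)) K0 N x
   = (if replicate_mset (Suc p) 1 \<subseteq># N then deriv q x * K0 (N - replicate_mset (Suc p) 1) x else 0)
   + (if replicate_mset (Suc p - 1) 1 \<subseteq># N then real (Suc p) * q x * Dtot K0 (N - replicate_mset (Suc p - 1) 1) x else 0)"
    by (subst frechet_rep) auto
  also have "\<dots> = (if N = replicate_mset (Suc p) 1 + replicate_mset 1 1 then deriv q x * x else 0)
   + ((if N = replicate_mset (Suc p - 1) 1 + replicate_mset (Suc 1) 1 then real (Suc p) * q x * deriv (\<lambda>x. x) x else 0)
     + (if N = replicate_mset (Suc p - 1) 1 + add_mset 2 (replicate_mset (1 - 1) 1) then real (Suc p) * q x * (real 1 * x) else 0))"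
    unfolding K0_def by (subst guard_Dtot) (simp_all only: guard_dmonom)
  finally have B: "frechet (dmonom q (replicate_mset (Suc p) 1)) K0 N x = \<dots>" .
  show ?thesis unfolding A B by (simp add: rep_add algebra_simps del: replicate_mset_Suc)
qed

lemma L2:
  "frechet (dmonom a (replicate_mset 3 1)) (dmonom q (replicate_mset (Suc p) 1)) N x
   - frechet (dmonom q (replicate_mset (Suc p) 1)) (dmonom a (replicate_mset 3 1)) N x
   = (if N = replicate_mset (Suc (Suc (Suc (Suc p)))) 1 then - real p * deriv a x * q x + 2 * a x * deriv q x else 0)"
proof -
  have "frechet (dmonom a (replicate_mset 3 1)) (dmonom q (replicate_mset (Suc p) 1)) N x
   = (if replicate_mset 3 1 \<subseteq># N then deriv a x * dmonom q (replicate_mset (Suc p) 1) (N - replicate_mset 3 1) x else 0)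
   + (if replicate_mset (3 - 1) 1 \<subseteq># N then real 3 * a x * Dtot (dmonom q (replicate_mset (Suc p) 1)) (N - replicate_mset (3 - 1) 1) x else 0)"
    by (subst frechet_rep) auto
  also have "\<dots> = (if N = replicate_mset 3 1 + replicate_mset (Suc p) 1 then deriv a x * q x else 0)
     + ((if N = replicate_mset (3 - 1) 1 + replicate_mset (Suc (Suc p)) 1 then real 3 * a x * deriv q x else 0)
       + (if N = replicate_mset (3 - 1) 1 + add_mset 2 (replicate_mset (Suc p - 1) 1) then real 3 * a x * (real (Suc p) * q x) else 0))"
    by (subst guard_Dtot) (simp_all only: guard_dmonom)
  finally have A: "frechet (dmonom a (replicate_mset 3 1)) (dmonom q (replicate_mset (Suc p) 1)) N x = \<dots>" .
  have "frechet (dmonom q (replicate_mset (Suc p) 1)) (dmonom a (replicate_mset 3 1)) N x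
   = (if replicate_mset (Suc p) 1 \<subseteq># N then deriv q x * dmonom a (replicate_mset 3 1) (N - replicate_mset (Suc p) 1) x else 0)
   + (if replicate_mset (Suc p - 1) 1 \<subseteq># N then real (Suc p) * q x * Dtot (dmonom a (replicate_mset 3 1)) (N - replicate_mset (Suc p - 1) 1) x else 0)"
    by (subst frechet_rep) auto
  also have "\<dots> = (if N = replicate_mset (Suc p) 1 + replicate_mset 3 1 then deriv q x * a x else 0)
   + ((if N = replicate_mset (Suc p - 1) 1 + replicate_mset (Suc 3) 1 then real (Suc p) * q x * deriv a x else 0)
     + (if N = replicate_mset (Suc p - 1) 1 + add_mset 2 (replicate_mset (3 - 1) 1) then real (Suc p) * q x * (real 3 * a x) else 0))"
    by (subst guard_Dtot) (simp_all only: guard_dmonom)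
  finally have B: "frechet (dmonom q (replicate_mset (Suc p) 1)) (dmonom a (replicate_mset 3 1)) N x = \<dots>" .
  have e4: "p + 4 = Suc (Suc (Suc (Suc p)))" by simp
  show ?thesis unfolding A B by (simp add: rep_add algebra_simps e4 del: replicate_mset_Suc)
qed

definition qq :: "(real \<Rightarrow> real) \<Rightarrow> (real \<Rightarrow> real) \<Rightarrow> nat \<Rightarrow> real \<Rightarrow> real" where
  "qq a b n = (\<lambda>x. a x ^ n * (deriv ^^ n) b x / fact n)"

lemma Qb_even: "Qb a b (2 * n) = dmonom (qq a b n) (replicate_mset (Suc (2 * n)) 1)"
  unfolding Qb_def qq_def by simp

lemma Qb_odd: "Qb a b (Suc (2 * n)) = dzero"
  unfolding Qb_def by simp

lemma C_inf_diff: "C_inf f \<Longrightarrow> (deriv ^^ n) f differentiable (at x)"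
  unfolding C_inf_def by blast

lemma qq_rec:
  assumes ha: "C_inf a" and hb: "C_inf b"
  shows "real (Suc p) * qq a b (Suc p) x
     = (1 - real (Suc p)) * deriv a x * qq a b p x + a x * deriv (qq a b p) x"
proof -
  have da: "(a has_real_derivative deriv a x) (at x)"
    using C_inf_diff[OF ha, of 0 x] by (simp add: DERIV_deriv_iff_real_differentiable)
  have db: "((deriv ^^ p) b has_real_derivative (deriv ^^ Suc p) b x) (at x)"
    using C_inf_diff[OF hb, of p x] by (simp add: DERIV_deriv_iff_real_differentiable)
  have d: "(qq a b p has_real_derivative
      ((real p * a x ^ (p - 1) * deriv a x) * (deriv ^^ p) b x + a x ^ p * (deriv ^^ Suc p) b x) / fact p) (at x)"
    unfolding qq_def
    by (rule derivative_eq_intros da db refl | simp)+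
  have dq: "deriv (qq a b p) x = ((real p * a x ^ (p - 1) * deriv a x) * (deriv ^^ p) b x + a x ^ p * (deriv ^^ Suc p) b x) / fact p"
    using d by (rule DERIV_imp_deriv)
  have e: "a x * (real p * a x ^ (p - 1)) = real p * a x ^ p" by (cases p) auto
  have h: "a x * deriv (qq a b p) x = (real p * a x ^ p * deriv a x * (deriv ^^ p) b x + a x ^ Suc p * (deriv ^^ Suc p) b x) / fact p"
    unfolding dq using e by (simp add: field_simps) blast
  have qS: "qq a b (Suc p) x = a x ^ Suc p * (deriv ^^ Suc p) b x / fact (Suc p)"
    unfolding qq_def by (rule refl)
  have qp: "qq a b p x = a x ^ p * (deriv ^^ p) b x / fact p"
    unfolding qq_def by (rule refl)
  have pos: "(0::real) < fact p + fact p * real p"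
    by (intro add_pos_nonneg) auto
  show ?thesis
    unfolding h qS qp using pos by (simp add: field_simps)
qed

lemma dpartial_dzero: "dpartial r dzero = dzero"
  unfolding dpartial_def dzero_def by (auto intro!: ext)

lemma frechet_dzero1 [simp]: "frechet dzero V N x = 0"
proof -
  have "frechet dzero V N x = (\<Sum>r\<le>0. dmult (dpartial r dzero) ((Dtot ^^ r) V) N x)"
    by (rule frechet_bounded) (simp add: dpartial_dzero)
  then show ?thesis by (simp add: dpartial_dzero)
qed

lemma Dtot_dzero: "Dtot dzero = dzero"
  unfolding Dtot_def by (simp add: dpartial_dzero) (simp add: dzero_def)

lemma Dtot_pow_dzero: "(Dtot ^^ r) dzero = dzero"
  by (induction r) (simp_all add: Dtot_dzero)

lemma frechet_dzero2 [simp]: "frechet P dzero N x = 0"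
  unfolding frechet_def by (simp add: Dtot_pow_dzero)

lemma sum_02:
  fixes f :: "nat \<Rightarrow> real"
  assumes "\<And>i. i \<noteq> 0 \<Longrightarrow> i \<noteq> 2 \<Longrightarrow> f i = 0"
  shows "(\<Sum>i\<le>m. f i) = f 0 + (if 2 \<le> m then f 2 else 0)"
proof -
  have "(\<Sum>i\<le>m. f i) = (\<Sum>i\<in>{..m} \<inter> {0,2}. f i)"
    using assms by (intro sum.mono_neutral_right) auto
  also have "\<dots> = f 0 + (if 2 \<le> m then f 2 else 0)"
  proof (cases "2 \<le> m")
    case True
    then have "{..m} \<inter> {0,2} = {0,2}" by auto
    then show ?thesis using True by simp
  next
    case False
    then have "{..m} \<inter> {0,2} = {0}" by auto
    then show ?thesis using False by simp
  qed
  finally show ?thesis .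
qed

lemma symm_reduce:
  "(\<Sum>i\<le>m. frechet (KK a i) (Q (m - i)) N x) - (\<Sum>i\<le>m. frechet (Q (m - i)) (KK a i) N x)
   = (frechet K0 (Q m) N x - frechet (Q m) K0 N x)
     + (if 2 \<le> m then frechet (dmonom a (replicate_mset 3 1)) (Q (m - 2)) N x
          - frechet (Q (m - 2)) (dmonom a (replicate_mset 3 1)) N x else 0)"
proof -
  have "(\<Sum>i\<le>m. frechet (KK a i) (Q (m - i)) N x) = frechet (KK a 0) (Q (m - 0)) N x
      + (if 2 \<le> m then frechet (KK a 2) (Q (m - 2)) N x else 0)"
    by (rule sum_02) (simp add: KKother)
  moreover have "(\<Sum>i\<le>m. frechet (Q (m - i)) (KK a i) N x) = frechet (Q (m - 0)) (KK a 0) N x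
      + (if 2 \<le> m then frechet (Q (m - 2)) (KK a 2) N x else 0)"
    by (rule sum_02) (simp add: KKother)
  ultimately show ?thesis by (simp add: KK0 KK2)
qed

lemma part1:
  assumes ha: "C_inf a" and hb: "C_inf b"
  shows "formal_symmetry (KK a) (Qb a b)"
  unfolding formal_symmetry_def
proof (intro allI)
  fix m N x
  have "(frechet K0 (Qb a b m) N x - frechet (Qb a b m) K0 N x)
     + (if 2 \<le> m then frechet (dmonom a (replicate_mset 3 1)) (Qb a b (m - 2)) N x
          - frechet (Qb a b (m - 2)) (dmonom a (replicate_mset 3 1)) N x else 0) = 0"
  proof (cases "even m")
    case True
    then obtain n where m: "m = 2 * n" by blast
    show ?thesis
    proof (cases n)
      case 0
      have q0: "Qb a b 0 = dmonom (qq a b 0) (replicate_mset (Suc 0) 1)" using Qb_even[of a b 0] by simp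
      have m0: "m = 0" using m 0 by simp
      show ?thesis using L0[of "qq a b 0" 0 N x] by (simp add: m0 q0)
    next
      case (Suc r)
      have m2: "m - 2 = 2 * r" using m Suc by simp
      have e1: "Suc (2 * n) = Suc (2 * Suc r)" using Suc by simp
      have h0: "frechet K0 (Qb a b m) N x - frechet (Qb a b m) K0 N x
          = (if N = replicate_mset (Suc (Suc (Suc (2 * r + 1)))) 1 then - real (2 * r + 2) * qq a b (Suc r) x else 0)"
        unfolding m Qb_even Suc using L0[of "qq a b (Suc r)" "2 * r + 2" N x] by simp
      have h2: "frechet (dmonom a (replicate_mset 3 1)) (Qb a b (m - 2)) N x
          - frechet (Qb a b (m - 2)) (dmonom a (replicate_mset 3 1)) N x
          = (if N = replicate_mset (Suc (Suc (Suc (Suc (2 * r))))) 1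
             then - real (2 * r) * deriv a x * qq a b r x + 2 * a x * deriv (qq a b r) x else 0)"
        unfolding m2 Qb_even using L2[of a "qq a b r" "2 * r" N x] by simp
      have rec: "real (Suc r) * qq a b (Suc r) x
          = (1 - real (Suc r)) * deriv a x * qq a b r x + a x * deriv (qq a b r) x"
        by (rule qq_rec[OF ha hb])
      have "2 \<le> m" using m Suc by simp
      then show ?thesis unfolding h0 h2 using rec by (simp add: algebra_simps)
    qed
  next
    case False
    then obtain n where m: "m = Suc (2 * n)" by (metis oddE Suc_eq_plus1)
    show ?thesis
    proof (cases n)
      case 0
      have q1: "Qb a b (Suc 0) = dzero" using Qb_odd[of a b 0] by simp
      show ?thesis using m 0 by (simp add: q1)
    next
      case (Suc r)
      have m2: "m - 2 = Suc (2 * r)" using m Suc by simp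
      show ?thesis unfolding m2 using m by (simp add: Qb_odd)
    qed
  qed
  then show "(\<Sum>i\<le>m. frechet (KK a i) (Qb a b (m - i)) N x) = (\<Sum>i\<le>m. frechet (Qb a b (m - i)) (KK a i) N x)"
    using symm_reduce[where m=m and a=a and Q="Qb a b" and N=N and x=x] by simp
qed

definition cr :: "nat \<Rightarrow> real" where "cr r = (if r = 1 then 1 else real r + 1)"

lemma Dtot_eval: "Dtot T B x = (\<Sum>s\<in>set_mset B - {0}. dpartial (s - 1) T (B - {#s#}) x)"
  unfolding Dtot_def by (rule refl)

lemma dpartial_pos: "r \<ge> 1 \<Longrightarrow> dpartial r T N x = real (count N r + 1) * T (add_mset r N) x"
  unfolding dpartial_def by simp

lemma dpartial_0: "dpartial 0 T N x = deriv (T N) x"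
  unfolding dpartial_def by simp

lemma size1_cases:
  assumes "size B = 1"
  obtains j where "B = {#j#}"
proof -
  from assms have sb: "size B = Suc 0" by simp
  obtain j B1 where b: "B = add_mset j B1" using size_eq_Suc_imp_eq_union[OF sb] by blast
  then have "B1 = {#}" using sb by simp
  then show ?thesis using that b by simp
qed

lemma size2_cases:
  assumes "size B = 2"
  obtains j l where "B = {#j, l#}"
proof -
  from assms have sb: "size B = Suc 1" by simp
  obtain j B1 where b: "B = add_mset j B1" using size_eq_Suc_imp_eq_union[OF sb] by blast
  then have B: "B = add_mset j B1" "size B1 = 1" using sb by simp_all
  from B(2) obtain l where "B1 = {#l#}" by (rule size1_cases)
  then show ?thesis using that B by simp
qed

lemma Tinv:
  "(Dtot ^^ r) K0 {#Suc r#} = (\<lambda>x. x) \<and>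
   (\<forall>B x y. size B = 2 \<longrightarrow> (Dtot ^^ r) K0 B x = (Dtot ^^ r) K0 B y) \<and>
   (\<forall>B x. (Dtot ^^ r) K0 B x \<noteq> 0 \<longrightarrow> B = {#Suc r#} \<or> (size B = 2 \<and> sum_mset B = Suc r \<and> 0 \<notin># B)) \<and>
   (r \<ge> 1 \<longrightarrow> (\<forall>x. (Dtot ^^ r) K0 {#1, r#} x = cr r))"
proof (induction r)
  case 0
  show ?case unfolding K0_def dmonom_def by auto
next
  case (Suc r)
  define T where "T = (Dtot ^^ r) K0"
  have TS: "(Dtot ^^ Suc r) K0 = Dtot T" unfolding T_def by simp
  have i: "T {#Suc r#} = (\<lambda>x. x)" using Suc.IH unfolding T_def by blast
  have ii: "\<And>B x y. size B = 2 \<Longrightarrow> T B x = T B y" using Suc.IH unfolding T_def by blast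
  have iii: "\<And>B x. T B x \<noteq> 0 \<Longrightarrow> B = {#Suc r#} \<or> (size B = 2 \<and> sum_mset B = Suc r \<and> 0 \<notin># B)"
    using Suc.IH unfolding T_def by blast
  have iv: "r \<ge> 1 \<Longrightarrow> T {#1, r#} x = cr r" for x using Suc.IH unfolding T_def by blast
  have dT: "T B' = (\<lambda>_. 0)" if "size B' \<noteq> 2" "B' \<noteq> {#Suc r#}" for B'
    using iii that by (auto intro!: ext)
  have d1: "deriv (T B') x = (if B' = {#Suc r#} then 1 else 0)" if "size B' = 1" for B' x
  proof (cases "B' = {#Suc r#}")
    case True then show ?thesis using i by simp
  next
    case False then show ?thesis using dT[of B'] that by simp
  qed
  have d2: "deriv (T B') x = 0" if "size B' = 2" for B' x
  proof -
    have "T B' = (\<lambda>_. T B' 0)" using ii[OF that] by (auto intro!: ext)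
    then show ?thesis by (metis deriv_const)
  qed
  have term_ge2: "dpartial (s - 1) T (B - {#s#}) x = real (count (B - {#s#}) (s - 1) + 1) * T (add_mset (s - 1) (B - {#s#})) x"
    if "s \<ge> 2" for s B x using that by (intro dpartial_pos) simp
  have term_1: "dpartial (s - 1) T (B - {#s#}) x = deriv (T (B - {#s#})) x" if "s = 1" for s B x
    using that by (simp add: dpartial_0)
  have I: "Dtot T {#Suc (Suc r)#} = (\<lambda>x. x)"
  proof
    fix x
    have "Dtot T {#Suc (Suc r)#} x = dpartial (Suc r) T {#} x" by (simp add: Dtot_eval)
    also have "\<dots> = x" using i by (simp add: dpartial_pos)
    finally show "Dtot T {#Suc (Suc r)#} x = x" .
  qed
  have II: "Dtot T B x = Dtot T B y" if B2: "size B = 2" for B x y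
    unfolding Dtot_eval
  proof (rule sum.cong[OF refl])
    fix s assume s: "s \<in> set_mset B - {0}"
    show "dpartial (s - 1) T (B - {#s#}) x = dpartial (s - 1) T (B - {#s#}) y"
    proof (cases "s = 1")
      case True
      have "size (B - {#s#}) = 1" using s B2 by (simp add: size_Diff_singleton)
      then show ?thesis using True by (simp add: dpartial_0 d1)
    next
      case False
      then have s2: "s \<ge> 2" using s by auto
      have sz: "size (add_mset (s - 1) (B - {#s#})) = 2" using s B2 by (simp add: size_Diff_singleton)
      show ?thesis unfolding term_ge2[OF s2] using ii[OF sz, of x y] by simp
    qed
  qed
  have III: "B = {#Suc (Suc r)#} \<or> (size B = 2 \<and> sum_mset B = Suc (Suc r) \<and> 0 \<notin># B)"
    if nz: "Dtot T B x \<noteq> 0" for B x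
  proof -
    from nz obtain s where s: "s \<in> set_mset B - {0}" and ts: "dpartial (s - 1) T (B - {#s#}) x \<noteq> 0"
      unfolding Dtot_eval by (meson sum.not_neutral_contains_not_neutral)
    have sB: "s \<in># B" "s \<noteq> 0" using s by auto
    have Beq: "B = add_mset s (B - {#s#})" using sB by simp
    show ?thesis
    proof (cases "s = 1")
      case True
      then have dnz: "deriv (T (B - {#1#})) x \<noteq> 0" using ts term_1 by simp
      have "size (B - {#1#}) \<noteq> 2" using d2 dnz by blast
      moreover have "B - {#1#} = {#Suc r#}"
      proof (rule ccontr)
        assume "B - {#1#} \<noteq> {#Suc r#}"
        with \<open>size (B - {#1#}) \<noteq> 2\<close> have "T (B - {#1#}) = (\<lambda>_. 0)" by (rule dT)
        with dnz show False by simp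
      qed
      ultimately show ?thesis using Beq True by auto
    next
      case False
      then have s2: "s \<ge> 2" using sB by auto
      have "T (add_mset (s - 1) (B - {#s#})) x \<noteq> 0" using ts term_ge2[OF s2] by auto
      then have "add_mset (s - 1) (B - {#s#}) = {#Suc r#} \<or>
          (size (add_mset (s - 1) (B - {#s#})) = 2 \<and> sum_mset (add_mset (s - 1) (B - {#s#})) = Suc r
           \<and> 0 \<notin># add_mset (s - 1) (B - {#s#}))"
        by (rule iii)
      then show ?thesis
      proof
        assume h: "add_mset (s - 1) (B - {#s#}) = {#Suc r#}"
        then have "B - {#s#} = {#}" "s - 1 = Suc r" by (auto simp: add_mset_eq_single)
        then have "B = {#s#}" "s = Suc (Suc r)" using sB by (metis insert_DiffM add_0_left add_mset_add_single, simp)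
        then show ?thesis by simp
      next
        define B' where "B' = B - {#s#}"
        have Beq': "B = add_mset s B'" unfolding B'_def using sB by simp
        assume h: "size (add_mset (s - 1) (B - {#s#})) = 2 \<and> sum_mset (add_mset (s - 1) (B - {#s#})) = Suc r
           \<and> 0 \<notin># add_mset (s - 1) (B - {#s#})"
        then have h': "size B' = 1" "s - 1 + sum_mset B' = Suc r" "0 \<notin># B'" unfolding B'_def[symmetric] by auto
        have "size B = 2" using h'(1) Beq' by simp
        moreover have "sum_mset B = Suc (Suc r)" using h'(2) Beq' s2 by simp
        moreover have "0 \<notin># B" using h'(3) Beq' sB by simp
        ultimately show ?thesis by blast
      qed
    qed
  qed
  have IV: "Dtot T {#1, Suc r#} x = cr (Suc r)" for x
  proof (cases "r = 0")
    case True
    have "Dtot T {#1, Suc r#} x = dpartial 0 T {#1#} x" using True by (simp add: Dtot_eval)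
    also have "\<dots> = 1" using i True by (simp add: dpartial_0)
    finally show ?thesis using True by (simp add: cr_def)
  next
    case False
    have set: "set_mset {#1, Suc r#} - {0} = {1, Suc r}" by auto
    have "Dtot T {#1, Suc r#} x = dpartial 0 T {#Suc r#} x + dpartial r T {#1#} x"
      unfolding Dtot_eval set using False by simp
    also have "\<dots> = 1 + real (count {#1#} r + 1) * T (add_mset r {#1#}) x"
      using i False by (simp add: dpartial_0 dpartial_pos)
    also have "T (add_mset r {#1#}) x = cr r" using iv[of x] False by (simp add: add_mset_commute)
    finally show ?thesis using False by (auto simp: cr_def)
  qed
  show ?case unfolding TS using I II III IV by blast
qed

lemma bound_exists:
  assumes fin: "finite {M. P M \<noteq> (\<lambda>_. 0)}"
  shows "\<exists>B0. \<forall>r>B0. dpartial r P = dzero"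
proof -
  define U where "U = insert 0 (\<Union>M\<in>{M. P M \<noteq> (\<lambda>_. 0)}. set_mset M)"
  have finU: "finite U" using fin unfolding U_def by auto
  define B0 where "B0 = Max U"
  have "dpartial r P = dzero" if r: "r > B0" for r
  proof (intro ext)
    fix N x
    have "P (add_mset r N) = (\<lambda>_. 0)"
    proof (rule ccontr)
      assume "P (add_mset r N) \<noteq> (\<lambda>_. 0)"
      then have "r \<in> U" unfolding U_def by auto
      then have "r \<le> B0" unfolding B0_def using finU by simp
      with r show False by simp
    qed
    moreover have "r \<noteq> 0" using r by simp
    ultimately show "dpartial r P N x = dzero N x" by (simp add: dpartial_def dzero_def)
  qed
  then show ?thesis by blast
qed

lemma frechet_K0: "frechet K0 V N x = (if 1 \<in># N then V (N - {#1#}) x else 0) + x * Dtot V N x"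
  unfolding K0_def by (subst frechet_rep) auto

lemma sum_count_image:
  fixes g :: "nat \<Rightarrow> real"
  shows "set_mset M \<subseteq> {..B} \<Longrightarrow> (\<Sum>r\<le>B. real (count M r) * g r) = sum_mset (image_mset g M)"
proof (induction M)
  case empty then show ?case by simp
next
  case (add x M)
  have xB: "x \<in> {..B}" using add.prems by simp
  have "(\<Sum>r\<le>B. real (count (add_mset x M) r) * g r) = (\<Sum>r\<le>B. real (count M r) * g r + (if r = x then g r else 0))"
    by (rule sum.cong) (auto simp: distrib_right)
  also have "\<dots> = (\<Sum>r\<le>B. real (count M r) * g r) + g x"
    using xB by (simp add: sum.distrib)
  also have "\<dots> = sum_mset (image_mset g (add_mset x M))"
    using add by simp
  finally show ?case .
qed

lemma diff_diff_single: "x \<in># N \<Longrightarrow> N - (N - {#x#}) = {#x#}"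
  using sub_diff_iff[of "N - {#x#}" N "{#x#}"] by simp

lemma kernel:
  fixes P :: dpoly
  assumes fin: "finite {M. P M \<noteq> (\<lambda>_. 0)}"
    and no0: "\<And>M. P M \<noteq> (\<lambda>_. 0) \<Longrightarrow> 0 \<notin># M"
    and deg: "\<And>M. P M \<noteq> (\<lambda>_. 0) \<Longrightarrow> 2 \<le> sum_mset M"
    and eq: "\<And>N x. frechet K0 P N x = frechet P K0 N x"
  shows "P M = (\<lambda>_. 0)"
proof (rule ccontr)
  assume PM: "P M \<noteq> (\<lambda>_. 0)"
  define Sp where "Sp = {M. P M \<noteq> (\<lambda>_. 0)}"
  have finSp: "finite Sp" using fin Sp_def by simp
  have MSp: "M \<in> Sp" using PM Sp_def by simp
  define cm where "cm = Max ((\<lambda>M. count M 1) ` Sp)"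
  have "cm \<in> (\<lambda>M. count M 1) ` Sp" unfolding cm_def using finSp MSp by (intro Max_in) auto
  then obtain M0 where M0: "M0 \<in> Sp" "count M0 1 = cm" by auto
  have maxi: "P N' = (\<lambda>_. 0)" if "cm < count N' 1" for N'
  proof (rule ccontr)
    assume "P N' \<noteq> (\<lambda>_. 0)"
    then have "N' \<in> Sp" by (simp add: Sp_def)
    then have "count N' 1 \<le> cm" unfolding cm_def using finSp by (intro Max_ge) auto
    with that show False by simp
  qed
  have PM0: "P M0 \<noteq> (\<lambda>_. 0)" using M0 Sp_def by simp
  then obtain x0 where x0: "P M0 x0 \<noteq> 0" by (auto simp: fun_eq_iff)
  have M0no0: "0 \<notin># M0" using no0 PM0 by blast
  have M0deg: "2 \<le> sum_mset M0" using deg PM0 by blast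
  define N where "N = add_mset 1 M0"
  obtain B0 where B0: "\<forall>r>B0. dpartial r P = dzero" using bound_exists[OF fin] by blast
  define B where "B = max B0 (Max (insert 0 (set_mset N)))"
  have BB0: "\<And>r. r > B \<Longrightarrow> dpartial r P = dzero" using B0 B_def by auto
  have NB: "s \<le> B" if "s \<in># N" for s
  proof -
    have "s \<le> Max (insert 0 (set_mset N))" using that by (intro Max_ge) auto
    then show ?thesis unfolding B_def by simp
  qed
  define T where "T r = (Dtot ^^ r) K0" for r
  have Ti: "T r {#Suc r#} = (\<lambda>x. x)" for r using Tinv[of r] T_def by simp
  have Tiii: "B' = {#Suc r#} \<or> (size B' = 2 \<and> sum_mset B' = Suc r \<and> 0 \<notin># B')"
    if "T r B' y \<noteq> 0" for r B' y using Tinv[of r] that unfolding T_def by blast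
  have Tiv: "T r {#1, r#} y = cr r" if "r \<ge> 1" for r y using Tinv[of r] that unfolding T_def by blast
  have inner: "dmult (dpartial r P) (T r) N x0 =
      (if Suc r \<in># N then dpartial r P (N - {#Suc r#}) x0 * x0 else 0)
    + (if 1 \<le> r \<and> r \<in># M0 then real (count M0 r) * cr r * P M0 x0 else 0)" for r
  proof -
    define h where "h A = dpartial r P A x0 * T r (N - A) x0" for A
    define h1 where "h1 A = (if Suc r \<in># N \<and> A = N - {#Suc r#} then h A else 0)" for A
    define h2 where "h2 A = (if 1 \<le> r \<and> r \<in># M0 \<and> A = M0 - {#r#} then h A else 0)" for A
    have split: "h A = h1 A + h2 A" if A: "A \<subseteq># N" for A
    proof -
      have disj: "\<not> ((Suc r \<in># N \<and> A = N - {#Suc r#}) \<and> (1 \<le> r \<and> r \<in># M0 \<and> A = M0 - {#r#}))"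
      proof
        assume c: "(Suc r \<in># N \<and> A = N - {#Suc r#}) \<and> (1 \<le> r \<and> r \<in># M0 \<and> A = M0 - {#r#})"
        have A1: "A = N - {#Suc r#}" "Suc r \<in># N" "A = M0 - {#r#}" "r \<in># M0" using c by auto
        have "size A = size N - 1" unfolding A1(1) using A1(2) by (simp add: size_Diff_singleton)
        moreover have "size A = size M0 - 1" unfolding A1(3) using A1(4) by (simp add: size_Diff_singleton)
        moreover have "size N = Suc (size M0)" unfolding N_def by simp
        moreover have "size M0 \<ge> 1"
        proof -
          have "M0 \<noteq> {#}" using c by auto
          then show ?thesis by (simp add: Suc_le_eq nonempty_has_size)
        qed
        ultimately show False by simp
      qed
      show ?thesis
      proof (cases "Suc r \<in># N \<and> A = N - {#Suc r#}")
        case True then show ?thesis using disj h1_def h2_def by auto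
      next
        case c1: False
        show ?thesis
        proof (cases "1 \<le> r \<and> r \<in># M0 \<and> A = M0 - {#r#}")
          case True then show ?thesis using c1 h1_def h2_def by auto
        next
          case c2: False
          have "h A = 0"
          proof (rule ccontr)
            assume hA: "h A \<noteq> 0"
            then have Tnz: "T r (N - A) x0 \<noteq> 0" and dnz: "dpartial r P A x0 \<noteq> 0" unfolding h_def by auto
            from Tiii[OF Tnz] show False
            proof
              assume e: "N - A = {#Suc r#}"
              have "Suc r \<in># N - A" using e by simp
              then have "Suc r \<in># N" by (rule in_diffD)
              moreover have "N = A + {#Suc r#}" using sub_diff_iff[OF A, of "{#Suc r#}"] e by blast
              then have "A = N - {#Suc r#}" by simp
              ultimately show False using c1 by simp
            next
              assume e: "size (N - A) = 2 \<and> sum_mset (N - A) = Suc r \<and> 0 \<notin># N - A"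
              obtain j l where jl: "N - A = {#j, l#}" using size2_cases[of "N - A"] e by blast
              have j0: "j \<noteq> 0" "l \<noteq> 0" using e jl by auto
              have sjl: "j + l = Suc r" using e jl by simp
              have NA: "N = A + {#j, l#}" using sub_diff_iff[OF A, of "{#j, l#}"] jl by blast
              show False
              proof (cases "j = 1 \<or> l = 1")
                case True
                then have "N = A + {#1, r#}" using NA sjl by (auto simp: add_mset_commute)
                then have "M0 = add_mset r A" using N_def by simp
                then have "r \<in># M0" "A = M0 - {#r#}" by simp_all
                moreover have "1 \<le> r" using True sjl j0 by auto
                ultimately show False using c2 by simp
              next
                case False
                have r1: "r \<ge> 1" "r \<noteq> 1" using sjl j0 False by auto
                have "count N 1 = count A 1" using NA False by simp
                then have "count (add_mset r A) 1 = Suc cm" using r1 N_def M0 by simp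
                then have "P (add_mset r A) = (\<lambda>_. 0)" by (intro maxi) simp
                then have "dpartial r P A x0 = 0" using r1 by (simp add: dpartial_pos)
                with dnz show False by simp
              qed
            qed
          qed
          moreover have "h1 A = 0" unfolding h1_def using c1 by (rule if_not_P)
          moreover have "h2 A = 0" unfolding h2_def using c2 by (rule if_not_P)
          ultimately show ?thesis by simp
        qed
      qed
    qed
    have fs: "finite {A. A \<subseteq># N}" by (rule finite_submsets)
    have "dmult (dpartial r P) (T r) N x0 = (\<Sum>A\<in>{A. A \<subseteq># N}. h A)" unfolding dmult_def h_def by simp
    also have "\<dots> = (\<Sum>A\<in>{A. A \<subseteq># N}. h1 A + h2 A)" by (rule sum.cong) (auto simp: split)
    also have "\<dots> = (\<Sum>A\<in>{A. A \<subseteq># N}. h1 A) + (\<Sum>A\<in>{A. A \<subseteq># N}. h2 A)" by (rule sum.distrib)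
    also have "(\<Sum>A\<in>{A. A \<subseteq># N}. h1 A) = (if Suc r \<in># N then dpartial r P (N - {#Suc r#}) x0 * x0 else 0)"
    proof (cases "Suc r \<in># N")
      case True
      have "(\<Sum>A\<in>{A. A \<subseteq># N}. h1 A) = (\<Sum>A\<in>{A. A \<subseteq># N}. if A = N - {#Suc r#} then h A else 0)"
        unfolding h1_def using True by simp
      also have "\<dots> = h (N - {#Suc r#})" using fs by (simp add: sum.delta')
      also have "\<dots> = dpartial r P (N - {#Suc r#}) x0 * x0" unfolding h_def using True Ti by (simp add: diff_diff_single)
      finally show ?thesis using True by simp
    next
      case False then show ?thesis unfolding h1_def by simp
    qed
    also have "(\<Sum>A\<in>{A. A \<subseteq># N}. h2 A) = (if 1 \<le> r \<and> r \<in># M0 then real (count M0 r) * cr r * P M0 x0 else 0)"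
    proof (cases "1 \<le> r \<and> r \<in># M0")
      case True
      define M' where "M' = M0 - {#r#}"
      have M0eq: "M0 = add_mset r M'" unfolding M'_def using True by simp
      have sub: "M' \<subseteq># N" unfolding N_def M0eq by simp
      have "(\<Sum>A\<in>{A. A \<subseteq># N}. h2 A) = (\<Sum>A\<in>{A. A \<subseteq># N}. if A = M' then h A else 0)"
        unfolding h2_def M'_def using True by simp
      also have "\<dots> = h M'" using fs sub by (simp add: sum.delta')
      also have "\<dots> = real (count M0 r) * cr r * P M0 x0"
      proof -
        have "N - M' = {#1, r#}" unfolding N_def M0eq by simp
        moreover have "dpartial r P M' x0 = real (count M0 r) * P M0 x0"
          using True by (simp add: dpartial_pos M0eq)
        ultimately show ?thesis unfolding h_def using Tiv True by simp
      qed
      finally show ?thesis using True by simp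
    next
      case False
      then have "h2 A = 0" for A unfolding h2_def by auto
      then show ?thesis using False by auto
    qed
    finally show ?thesis .
  qed
  have rhs: "frechet P K0 N x0 = (\<Sum>r\<le>B. (if Suc r \<in># N then dpartial r P (N - {#Suc r#}) x0 * x0 else 0))
      + (\<Sum>r\<le>B. if 1 \<le> r \<and> r \<in># M0 then real (count M0 r) * cr r * P M0 x0 else 0)"
  proof -
    have "frechet P K0 N x0 = (\<Sum>r\<le>B. dmult (dpartial r P) (T r) N x0)"
      unfolding T_def by (rule frechet_bounded) (rule BB0)
    then show ?thesis unfolding inner by (simp add: sum.distrib)
  qed
  have s1: "(\<Sum>r\<le>B. (if Suc r \<in># N then dpartial r P (N - {#Suc r#}) x0 * x0 else 0)) = x0 * Dtot P N x0"
  proof -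
    have seteq: "set_mset N - {0} = Suc ` {r \<in> {..B}. Suc r \<in># N}"
    proof (rule set_eqI)
      fix s
      show "s \<in> set_mset N - {0} \<longleftrightarrow> s \<in> Suc ` {r \<in> {..B}. Suc r \<in># N}"
      proof
        assume s: "s \<in> set_mset N - {0}"
        then have "s = Suc (s - 1)" "s - 1 \<le> B" "Suc (s - 1) \<in># N" using NB[of s] by auto
        then show "s \<in> Suc ` {r \<in> {..B}. Suc r \<in># N}" by (intro image_eqI[of s Suc "s - 1"]) auto
      qed auto
    qed
    have "Dtot P N x0 = (\<Sum>s\<in>set_mset N - {0}. dpartial (s - 1) P (N - {#s#}) x0)" by (rule Dtot_eval)
    also have "\<dots> = (\<Sum>s\<in>Suc ` {r \<in> {..B}. Suc r \<in># N}. dpartial (s - 1) P (N - {#s#}) x0)" unfolding seteq ..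
    also have "\<dots> = (\<Sum>r\<in>{r \<in> {..B}. Suc r \<in># N}. dpartial r P (N - {#Suc r#}) x0)"
      by (subst sum.reindex) auto
    also have "\<dots> = (\<Sum>r\<le>B. if Suc r \<in># N then dpartial r P (N - {#Suc r#}) x0 else 0)"
      by (rule sum.inter_filter) simp
    finally have "x0 * Dtot P N x0 = x0 * (\<Sum>r\<le>B. if Suc r \<in># N then dpartial r P (N - {#Suc r#}) x0 else 0)" by simp
    also have "\<dots> = (\<Sum>r\<le>B. (if Suc r \<in># N then dpartial r P (N - {#Suc r#}) x0 * x0 else 0))"
      unfolding sum_distrib_left by (rule sum.cong) auto
    finally show ?thesis by simp
  qed
  have s2: "(\<Sum>r\<le>B. if 1 \<le> r \<and> r \<in># M0 then real (count M0 r) * cr r * P M0 x0 else 0)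
      = sum_mset (image_mset cr M0) * P M0 x0"
  proof -
    have "(\<Sum>r\<le>B. if 1 \<le> r \<and> r \<in># M0 then real (count M0 r) * cr r * P M0 x0 else 0)
        = (\<Sum>r\<le>B. real (count M0 r) * cr r * P M0 x0)"
    proof (rule sum.cong[OF refl])
      fix r
      show "(if 1 \<le> r \<and> r \<in># M0 then real (count M0 r) * cr r * P M0 x0 else 0) = real (count M0 r) * cr r * P M0 x0"
      proof (cases "1 \<le> r \<and> r \<in># M0")
        case False
        then have "count M0 r = 0" using M0no0 by (cases "r = 0") (auto simp: not_in_iff)
        then show ?thesis by simp
      qed simp
    qed
    also have "\<dots> = (\<Sum>r\<le>B. real (count M0 r) * cr r) * P M0 x0" by (simp add: sum_distrib_right)
    also have "(\<Sum>r\<le>B. real (count M0 r) * cr r) = sum_mset (image_mset cr M0)"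
      by (rule sum_count_image) (auto simp: N_def intro: NB)
    finally show ?thesis .
  qed
  have lhs: "frechet K0 P N x0 = P M0 x0 + x0 * Dtot P N x0" using frechet_K0 N_def by simp
  have big: "2 \<le> sum_mset (image_mset cr M0)"
  proof -
    have "sum_mset (image_mset real M0) \<le> sum_mset (image_mset cr M0)"
      by (rule sum_mset_mono) (simp add: cr_def)
    moreover have "real (sum_mset M0) = sum_mset (image_mset real M0)" by simp
    moreover have "(2::real) \<le> real (sum_mset M0)" using M0deg by (metis of_nat_le_iff of_nat_numeral)
    ultimately show ?thesis by linarith
  qed
  have "P M0 x0 = sum_mset (image_mset cr M0) * P M0 x0" using eq[of N x0] lhs rhs s1 s2 by simp
  then have "(sum_mset (image_mset cr M0) - 1) * P M0 x0 = 0" by (simp add: algebra_simps)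
  with big x0 show False by simp
qed

lemma deriv_diff_real:
  fixes f g :: "real \<Rightarrow> real"
  assumes "f differentiable at x" "g differentiable at x"
  shows "deriv (\<lambda>w. f w - g w) x = deriv f x - deriv g x"
proof -
  have "(f has_real_derivative deriv f x) (at x)" using assms(1) by (simp add: DERIV_deriv_iff_real_differentiable)
  moreover have "(g has_real_derivative deriv g x) (at x)" using assms(2) by (simp add: DERIV_deriv_iff_real_differentiable)
  ultimately have "((\<lambda>w. f w - g w) has_real_derivative deriv f x - deriv g x) (at x)" by (rule DERIV_diff)
  then show ?thesis by (rule DERIV_imp_deriv)
qed

lemma dpartial_diff:
  assumes d1: "\<And>N x. P1 N differentiable at x" and d2: "\<And>N x. P2 N differentiable at x"
  shows "dpartial r (\<lambda>N x. P1 N x - P2 N x) = (\<lambda>N x. dpartial r P1 N x - dpartial r P2 N x)"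
  unfolding dpartial_def by (auto intro!: ext simp: deriv_diff_real d1 d2 right_diff_distrib)

lemma Dtot_diff:
  assumes d1: "\<And>N x. P1 N differentiable at x" and d2: "\<And>N x. P2 N differentiable at x"
  shows "Dtot (\<lambda>N x. P1 N x - P2 N x) N x = Dtot P1 N x - Dtot P2 N x"
  unfolding Dtot_eval dpartial_diff[OF d1 d2] by (simp add: sum_subtractf)

lemma frechet_K0_diff:
  assumes d1: "\<And>N x. P1 N differentiable at x" and d2: "\<And>N x. P2 N differentiable at x"
  shows "frechet K0 (\<lambda>N x. P1 N x - P2 N x) N x = frechet K0 P1 N x - frechet K0 P2 N x"
  unfolding frechet_K0 Dtot_diff[OF d1 d2] by (simp add: algebra_simps)

lemma frechet_diff1:
  assumes d1: "\<And>N x. P1 N differentiable at x" and d2: "\<And>N x. P2 N differentiable at x"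
    and b1: "\<And>r. r > B \<Longrightarrow> dpartial r P1 = dzero" and b2: "\<And>r. r > B \<Longrightarrow> dpartial r P2 = dzero"
  shows "frechet (\<lambda>N x. P1 N x - P2 N x) V N x = frechet P1 V N x - frechet P2 V N x"
proof -
  have b: "dpartial r (\<lambda>N x. P1 N x - P2 N x) = dzero" if "r > B" for r
    unfolding dpartial_diff[OF d1 d2] using b1[OF that] b2[OF that] by (simp add: dzero_def)
  have "frechet (\<lambda>N x. P1 N x - P2 N x) V N x
      = (\<Sum>r\<le>B. dmult (dpartial r (\<lambda>N x. P1 N x - P2 N x)) ((Dtot ^^ r) V) N x)"
    by (rule frechet_bounded) (rule b)
  also have "\<dots> = (\<Sum>r\<le>B. dmult (dpartial r P1) ((Dtot ^^ r) V) N x - dmult (dpartial r P2) ((Dtot ^^ r) V) N x)"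
    unfolding dpartial_diff[OF d1 d2] dmult_diff1 ..
  also have "\<dots> = frechet P1 V N x - frechet P2 V N x"
    by (simp add: sum_subtractf frechet_bounded[of B P1, OF b1] frechet_bounded[of B P2, OF b2])
  finally show ?thesis .
qed

lemma qq_deriv:
  assumes ha: "C_inf a" and hb: "C_inf b"
  shows "(qq a b p has_real_derivative
      ((real p * a x ^ (p - 1) * deriv a x) * (deriv ^^ p) b x + a x ^ p * (deriv ^^ Suc p) b x) / fact p) (at x)"
proof -
  have da: "(a has_real_derivative deriv a x) (at x)"
    using C_inf_diff[OF ha, of 0 x] by (simp add: DERIV_deriv_iff_real_differentiable)
  have db: "((deriv ^^ p) b has_real_derivative (deriv ^^ Suc p) b x) (at x)"
    using C_inf_diff[OF hb, of p x] by (simp add: DERIV_deriv_iff_real_differentiable)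
  show ?thesis
    unfolding qq_def
    by (rule derivative_eq_intros da db refl | simp)+
qed

lemma qq_differentiable: "C_inf a \<Longrightarrow> C_inf b \<Longrightarrow> qq a b n differentiable at x"
  using qq_deriv[of a b n x] by (auto simp: real_differentiable_def)

lemma Qb_coef_diff:
  assumes "C_inf a" "C_inf b"
  shows "Qb a b m N differentiable at x"
  unfolding Qb_def dmonom_def dzero_def
  using qq_differentiable[OF assms, of "m div 2" x] unfolding qq_def by auto

lemma part2:
  assumes ha: "C_inf a" and hb: "C_inf b"
  shows "\<forall>c :: nat \<Rightarrow> real \<Rightarrow> real.
          (c 0 = b \<and> (\<forall>n\<ge>1. \<forall>x. real n * c n x
              = (1 - real n) * deriv a x * c (n - 1) x + a x * deriv (c (n - 1)) x))
          \<longleftrightarrow> c = (\<lambda>n x. a x ^ n * (deriv ^^ n) b x / fact n)"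
proof (intro allI iffI)
  have qqe: "(\<lambda>n x. a x ^ n * (deriv ^^ n) b x / fact n) = qq a b" by (intro ext) (simp add: qq_def)
  have qq0: "qq a b 0 = b" by (intro ext) (simp add: qq_def)
  fix c
  {
    assume H: "c 0 = b \<and> (\<forall>n\<ge>1. \<forall>x. real n * c n x
              = (1 - real n) * deriv a x * c (n - 1) x + a x * deriv (c (n - 1)) x)"
    have "c n = qq a b n" for n
    proof (induction n)
      case 0 then show ?case using H qq0 by simp
    next
      case (Suc p)
      show ?case
      proof (rule ext)
        fix x
        have H2: "\<And>n x. n \<ge> 1 \<Longrightarrow> real n * c n x = (1 - real n) * deriv a x * c (n - 1) x + a x * deriv (c (n - 1)) x"
          using H by blast
        have "real (Suc p) * c (Suc p) x = (1 - real (Suc p)) * deriv a x * c p x + a x * deriv (c p) x"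
          using H2[of "Suc p" x] by simp
        also have "\<dots> = real (Suc p) * qq a b (Suc p) x" using Suc.IH qq_rec[OF ha hb, of p x] by simp
        finally show "c (Suc p) x = qq a b (Suc p) x" by simp
      qed
    qed
    then show "c = (\<lambda>n x. a x ^ n * (deriv ^^ n) b x / fact n)" unfolding qqe by (intro ext) simp
  }
  {
    assume "c = (\<lambda>n x. a x ^ n * (deriv ^^ n) b x / fact n)"
    then have c: "c = qq a b" using qqe by simp
    have "\<forall>n\<ge>1. \<forall>x. real n * c n x = (1 - real n) * deriv a x * c (n - 1) x + a x * deriv (c (n - 1)) x"
    proof (intro allI impI)
      fix n :: nat and x assume "n \<ge> 1"
      then obtain p where n: "n = Suc p" by (cases n) auto
      show "real n * c n x = (1 - real n) * deriv a x * c (n - 1) x + a x * deriv (c (n - 1)) x"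
        unfolding c n using qq_rec[OF ha hb, of p x] by simp
    qed
    then show "c 0 = b \<and> (\<forall>n\<ge>1. \<forall>x. real n * c n x
              = (1 - real n) * deriv a x * c (n - 1) x + a x * deriv (c (n - 1)) x)"
      using c qq0 by simp
  }
qed

lemma part3:
  assumes ha: "C_inf a" and hb: "C_inf b"
    and Qdk: "\<forall>n. in_Dk (2 * n + 1) (Q (2 * n))" and Qodd: "\<forall>n. Q (2 * n + 1) = dzero"
    and Q0: "Q 0 = dmonom b {#1#}" and fs: "formal_symmetry (KK a) Q"
  shows "Q = Qb a b"
proof -
  have QbS: "formal_symmetry (KK a) (Qb a b)" by (rule part1[OF ha hb])
  have ev: "Q (2 * n) = Qb a b (2 * n)" for n
  proof (induction n)
    case 0
    have "qq a b 0 = b" by (intro ext) (simp add: qq_def)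
    then show ?case using Q0 Qb_even[of a b 0] by simp
  next
    case (Suc r)
    define m where "m = 2 * Suc r"
    have m2: "m - 2 = 2 * r" and m2le: "2 \<le> m" unfolding m_def by simp_all
    have Qprev: "Q (m - 2) = Qb a b (m - 2)" using Suc.IH m2 by simp
    have E1: "(frechet K0 (Q m) N x - frechet (Q m) K0 N x)
       + (frechet (dmonom a (replicate_mset 3 1)) (Q (m - 2)) N x
          - frechet (Q (m - 2)) (dmonom a (replicate_mset 3 1)) N x) = 0" for N x
      using fs symm_reduce[where m=m and a=a and Q=Q and N=N and x=x] m2le
      unfolding formal_symmetry_def by simp
    have E2: "(frechet K0 (Qb a b m) N x - frechet (Qb a b m) K0 N x)
       + (frechet (dmonom a (replicate_mset 3 1)) (Qb a b (m - 2)) N x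
          - frechet (Qb a b (m - 2)) (dmonom a (replicate_mset 3 1)) N x) = 0" for N x
      using QbS symm_reduce[where m=m and a=a and Q="Qb a b" and N=N and x=x] m2le
      unfolding formal_symmetry_def by simp
    have E: "frechet K0 (Q m) N x - frechet (Q m) K0 N x = frechet K0 (Qb a b m) N x - frechet (Qb a b m) K0 N x" for N x
      using E1[of N x] E2[of N x] unfolding Qprev by linarith
    have QDk: "in_Dk (2 * Suc r + 1) (Q m)" using Qdk m_def by blast
    then have finQ: "finite {M. Q m M \<noteq> (\<lambda>_. 0)}" and no0Q: "\<And>M. Q m M \<noteq> (\<lambda>_. 0) \<Longrightarrow> 0 \<notin># M"
      and CQ: "\<And>M. C_inf (Q m M)" and degQ: "\<And>M. Q m M \<noteq> (\<lambda>_. 0) \<Longrightarrow> sum_mset M = 2 * Suc r + 1"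
      unfolding in_Dk_def in_D_def by blast+
    have dQ: "\<And>N x. Q m N differentiable at x" using C_inf_diff[OF CQ, of 0] by simp
    have dQb: "\<And>N x. Qb a b m N differentiable at x" by (rule Qb_coef_diff[OF ha hb])
    have Qbm: "Qb a b m = dmonom (qq a b (Suc r)) (replicate_mset (Suc m) 1)" unfolding m_def by (rule Qb_even)
    have suppQb: "M = replicate_mset (Suc m) 1" if "Qb a b m M \<noteq> (\<lambda>_. 0)" for M
      using that unfolding Qbm dmonom_def by (auto split: if_splits)
    have finQb: "finite {M. Qb a b m M \<noteq> (\<lambda>_. 0)}"
      by (rule finite_subset[of _ "{replicate_mset (Suc m) 1}"]) (auto dest: suppQb)
    obtain B1 where B1: "\<forall>r>B1. dpartial r (Q m) = dzero" using bound_exists[OF finQ] by blast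
    obtain B2 where B2: "\<forall>r>B2. dpartial r (Qb a b m) = dzero" using bound_exists[OF finQb] by blast
    define R where "R = (\<lambda>N x. Q m N x - Qb a b m N x)"
    have suppR: "Q m M \<noteq> (\<lambda>_. 0) \<or> Qb a b m M \<noteq> (\<lambda>_. 0)" if "R M \<noteq> (\<lambda>_. 0)" for M
      using that unfolding R_def by auto
    have finR: "finite {M. R M \<noteq> (\<lambda>_. 0)}"
      by (rule finite_subset[of _ "{M. Q m M \<noteq> (\<lambda>_. 0)} \<union> {M. Qb a b m M \<noteq> (\<lambda>_. 0)}"])
        (auto dest: suppR simp: finQ finQb)
    have no0R: "0 \<notin># M" if "R M \<noteq> (\<lambda>_. 0)" for M
      using suppR[OF that]
    proof
      assume "Q m M \<noteq> (\<lambda>_. 0)" then show ?thesis by (rule no0Q)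
    next
      assume "Qb a b m M \<noteq> (\<lambda>_. 0)"
      then have "M = replicate_mset (Suc m) 1" by (rule suppQb)
      then show ?thesis by simp
    qed
    have degR: "2 \<le> sum_mset M" if "R M \<noteq> (\<lambda>_. 0)" for M
      using suppR[OF that]
    proof
      assume "Q m M \<noteq> (\<lambda>_. 0)" then show ?thesis using degQ by simp
    next
      assume "Qb a b m M \<noteq> (\<lambda>_. 0)"
      then have "M = replicate_mset (Suc m) 1" by (rule suppQb)
      then show ?thesis using m2le by simp
    qed
    have eqR: "frechet K0 R N x = frechet R K0 N x" for N x
    proof -
      have "frechet K0 R N x = frechet K0 (Q m) N x - frechet K0 (Qb a b m) N x"
        unfolding R_def by (rule frechet_K0_diff[OF dQ dQb])
      moreover have "frechet R K0 N x = frechet (Q m) K0 N x - frechet (Qb a b m) K0 N x"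
        unfolding R_def by (rule frechet_diff1[OF dQ dQb, of "max B1 B2"]) (use B1 B2 in auto)
      ultimately show ?thesis using E[of N x] by linarith
    qed
    have "R M = (\<lambda>_. 0)" for M by (rule kernel[OF finR no0R degR eqR])
    then have "Q m = Qb a b m" unfolding R_def by (intro ext) (metis eq_iff_diff_eq_0)
    then show ?case unfolding m_def .
  qed
  have od: "Q (Suc (2 * n)) = Qb a b (Suc (2 * n))" for n using Qodd Qb_odd by simp
  show ?thesis
  proof (rule ext)
    fix m
    show "Q m = Qb a b m"
    proof (cases "even m")
      case True then obtain n where "m = 2 * n" by blast
      then show ?thesis using ev by simp
    next
      case False then obtain n where "m = Suc (2 * n)" by (metis oddE Suc_eq_plus1)
      then show ?thesis using od by simp
    qed
  qed
qed

theorem mainTheorem6: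
  fixes a b :: "real \<Rightarrow> real"
  assumes "C_inf a" and "C_inf b"
  shows "formal_symmetry (KK a) (Qb a b)
    \<and> (\<forall>c :: nat \<Rightarrow> real \<Rightarrow> real.
          (c 0 = b \<and> (\<forall>n\<ge>1. \<forall>x. real n * c n x
              = (1 - real n) * deriv a x * c (n - 1) x + a x * deriv (c (n - 1)) x))
          \<longleftrightarrow> c = (\<lambda>n x. a x ^ n * (deriv ^^ n) b x / fact n))
    \<and> (\<forall>Q :: fseries.
          (\<forall>n. in_Dk (2 * n + 1) (Q (2 * n))) \<and> (\<forall>n. Q (2 * n + 1) = dzero)
          \<and> Q 0 = dmonom b {#1#} \<and> formal_symmetry (KK a) Q
          \<longrightarrow> Q = Qb a b)"
  using part1[OF assms] part2[OF assms] part3[OF assms] by blast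

end
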